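(* Let $T\in\mathbb{N}$, $\Delta t>0$, $r\in\mathbb{R}$, $\mu\in\mathbb{R}$, $\sigma>0$, $S_0>0$, $B>0$ and $K\in\mathbb{R}$. Let $S_0$ be deterministic and $$S_{j+1}=S_j\exp\Big(\big(\mu-\tfrac{\sigma^2}{2}\big)\Delta t+\sigma\sqrt{\Delta t}\,Z_j\Big),\qquad j=0,\dots,T-1,$$ with $Z_0,\dots,Z_{T-1}$ independent standard normal random variables. Let $q(x)=(x-K)^+$ and let the knock-up-out barrier call payoff be $$V(S_1,\dots,S_T)=\begin{cases} q(S_T) & \text{if } \max_{j=1,\dots,T}S_j\le B,\\ 0&\text{otherwise,}\end{cases}$$ with present value $PV_{t_0}(S_0)=e^{-rT\Delta t}\,\mathbb{E}\big(V(S_1,\dots,S_T)\big)$. For $u=(u^{(1)},\dots,u^{(T)})\in[0,1]^T$ define recursively $S_0(u)=S_0$ and, for $t=0,\dots,T-1$, $$p_t=\Phi\left(\frac{\log\big(B/S_t(u)\big)-\big(\mu-\frac{\sigma^2}{2}\big)\Delta t}{\sigma\sqrt{\Delta t}}\right),\qquad S_{t+1}(u)=S_t(u)\exp\Big(\big(\mu-\tfrac{\sigma^2}{2}\big)\Delta t+\sigma\sqrt{\Delta t}\,\Phi^{-1}\big(p_t\,u^{(t+1)}\big)\Big).$$ Then $$PV_{t_0}(S_0)=e^{-rT\Delta t}\int_0^1\cdots\int_0^1 p_0\cdots p_{T-1}\; q\big(S_T(u)\big)\,\mathrm{d}u^{(T)}\cdots\mathrm{d}u^{(1)}.$$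
   Context: $\Phi$ denotes the standard normal cumulative distribution function and $\Phi^{-1}$ its inverse. The observation dates $t_0<t_1<\dots<t_T$ are equidistant with spacing $\Delta t$, so $t_T-t_0=T\Delta t$; $\mu=r-b$ where $r$ is the risk-free rate and $b$ the dividend yield. Note $p_t$ depends on $u^{(1)},\dots,u^{(t)}$ through $S_t(u)$, and $S_T(u)$ depends on all of $u$. *)

theory Defs
  imports "HOL-Probability.Probability"
begin

definition Phi :: "real \<Rightarrow> real" where
  "Phi x = set_lebesgue_integral lborel {..x} std_normal_density"

definition Phi_inv :: "real \<Rightarrow> real" where
  "Phi_inv p = inv_into UNIV Phi p"

definition q_call :: "real \<Rightarrow> real \<Rightarrow> real" where
  "q_call K x = max (x - K) 0"

definition drift :: "real \<Rightarrow> real \<Rightarrow> real \<Rightarrow> real" where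
  "drift mu sig dt = (mu - sig\<^sup>2 / 2) * dt"

fun Spath :: "real \<Rightarrow> real \<Rightarrow> real \<Rightarrow> real \<Rightarrow> (nat \<Rightarrow> real) \<Rightarrow> nat \<Rightarrow> real" where
  "Spath S0 mu sig dt z 0 = S0"
| "Spath S0 mu sig dt z (Suc j) =
     Spath S0 mu sig dt z j * exp (drift mu sig dt + sig * sqrt dt * z j)"

definition barrier_payoff :: "real \<Rightarrow> real \<Rightarrow> nat \<Rightarrow> (nat \<Rightarrow> real) \<Rightarrow> real" where
  "barrier_payoff K B T S = (if (\<forall>j\<in>{1..T}. S j \<le> B) then q_call K (S T) else 0)"

text \<open>Conditional probability of staying below the barrier in one step, from level s.\<close>
definition pstep :: "real \<Rightarrow> real \<Rightarrow> real \<Rightarrow> real \<Rightarrow> real \<Rightarrow> real" where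
  "pstep B mu sig dt s = Phi ((ln (B / s) - drift mu sig dt) / (sig * sqrt dt))"

fun Su :: "real \<Rightarrow> real \<Rightarrow> real \<Rightarrow> real \<Rightarrow> real \<Rightarrow> (nat \<Rightarrow> real) \<Rightarrow> nat \<Rightarrow> real" where
  "Su S0 B mu sig dt u 0 = S0"
| "Su S0 B mu sig dt u (Suc t) =
     Su S0 B mu sig dt u t *
       exp (drift mu sig dt + sig * sqrt dt *
            Phi_inv (pstep B mu sig dt (Su S0 B mu sig dt u t) * u (Suc t)))"

definition p_u :: "real \<Rightarrow> real \<Rightarrow> real \<Rightarrow> real \<Rightarrow> real \<Rightarrow> (nat \<Rightarrow> real) \<Rightarrow> nat \<Rightarrow> real" where
  "p_u S0 B mu sig dt u t = pstep B mu sig dt (Su S0 B mu sig dt u t)"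

end

theory Submission
  imports Defs
begin

definition NN :: "real measure" where
  "NN = density lborel (\<lambda>x. ennreal (std_normal_density x))"

lemma NN_prob: "prob_space NN"
  unfolding NN_def using prob_space_normal_density by simp

lemma NN_real_dist: "real_distribution NN"
  unfolding real_distribution_def real_distribution_axioms_def
  using NN_prob by (simp add: NN_def)

lemma sets_NN[simp, measurable_cong]: "sets NN = sets borel"
  by (simp add: NN_def)

lemma space_NN[simp]: "space NN = UNIV"
  by (simp add: NN_def)

lemma emeasure_NN: "A \<in> sets borel \<Longrightarrow> emeasure NN A = (\<integral>\<^sup>+x. ennreal (std_normal_density x) * indicator A x \<partial>lborel)"
  unfolding NN_def by (simp add: emeasure_density)

lemma Phi_cdf: "Phi x = measure NN {..x}"
proof -
  have "Phi x = integral\<^sup>L lborel (\<lambda>y. indicator {..x} y *\<^sub>R std_normal_density y)"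
    unfolding Phi_def set_lebesgue_integral_def by simp
  also have "\<dots> = enn2real (\<integral>\<^sup>+y. ennreal (indicator {..x} y *\<^sub>R std_normal_density y) \<partial>lborel)"
    by (rule integral_eq_nn_integral) auto
  also have "\<dots> = enn2real (emeasure NN {..x})"
    by (subst emeasure_NN) (auto intro!: arg_cong[where f=enn2real] nn_integral_cong simp: indicator_def)
  finally show ?thesis by (simp add: measure_def)
qed

lemma Phi_eq_cdf: "Phi = cdf NN"
  by (rule ext) (simp add: Phi_cdf cdf_def)

lemma Phi_diff: "x < y \<Longrightarrow> Phi y - Phi x = measure NN {x<..y}"
proof -
  interpret real_distribution NN by (rule NN_real_dist)
  assume "x < y" then show ?thesis unfolding Phi_eq_cdf by (rule cdf_diff_eq)
qed

lemma Phi_strict: assumes "x < y" shows "Phi x < Phi y"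
proof -
  interpret real_distribution NN by (rule NN_real_dist)
  define c where "c = std_normal_density (\<bar>x\<bar> + \<bar>y\<bar>)"
  have cpos: "c > 0" unfolding c_def by (simp add: normal_density_pos)
  have "ennreal c * ennreal (y - x) = (\<integral>\<^sup>+z. ennreal c * indicator {x<..y} z \<partial>lborel)"
    using assms by (simp add: nn_integral_cmult_indicator)
  also have "\<dots> \<le> (\<integral>\<^sup>+z. ennreal (std_normal_density z) * indicator {x<..y} z \<partial>lborel)"
  proof (intro nn_integral_mono)
    fix z show "ennreal c * indicator {x<..y} z \<le> ennreal (std_normal_density z) * indicator {x<..y} z"
    proof (cases "z \<in> {x<..y}")
      case True
      then have "\<bar>z\<bar> \<le> \<bar>x\<bar> + \<bar>y\<bar>" by auto
      then have "z\<^sup>2 \<le> (\<bar>x\<bar> + \<bar>y\<bar>)\<^sup>2"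
        by (metis abs_ge_zero abs_le_square_iff abs_of_nonneg add_nonneg_nonneg)
      then have "c \<le> std_normal_density z"
        unfolding c_def std_normal_density_def by (simp add: divide_right_mono)
      then show ?thesis using True by (simp add: ennreal_leI)
    qed simp
  qed
  also have "\<dots> = emeasure NN {x<..y}" by (simp add: emeasure_NN)
  finally have le: "ennreal c * ennreal (y - x) \<le> emeasure NN {x<..y}" .
  have "0 < ennreal c * ennreal (y - x)"
    using cpos assms by (simp add: ennreal_mult[symmetric])
  then have "0 < emeasure NN {x<..y}" using le by (rule less_le_trans)
  then have "0 < measure NN {x<..y}"
    by (simp add: emeasure_eq_measure)
  with Phi_diff[of x y] assms show ?thesis by simp
qed

lemma Phi_mono: "x \<le> y \<Longrightarrow> Phi x \<le> Phi y"
  using Phi_strict by (cases "x = y") (auto simp: less_imp_le)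

lemma Phi_cont: "isCont Phi x"
proof -
  interpret real_distribution NN by (rule NN_real_dist)
  have "emeasure NN {x} = (\<integral>\<^sup>+z. ennreal (std_normal_density x) * indicator {x} z \<partial>lborel)"
    by (simp add: emeasure_NN)
  also have "\<dots> = 0" by (simp add: nn_integral_cmult_indicator)
  finally have "measure NN {x} = 0" by (simp add: measure_def)
  then show ?thesis unfolding Phi_eq_cdf by (simp add: isCont_cdf)
qed

lemma Phi_lim_bot: "(Phi \<longlongrightarrow> 0) at_bot"
proof -
  interpret real_distribution NN by (rule NN_real_dist)
  show ?thesis unfolding Phi_eq_cdf by (rule cdf_lim_at_bot)
qed

lemma Phi_lim_top: "(Phi \<longlongrightarrow> 1) at_top"
proof -
  interpret real_distribution NN by (rule NN_real_dist)
  show ?thesis unfolding Phi_eq_cdf by (rule cdf_lim_at_top_prob)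
qed

lemma Phi_pos: "0 < Phi x"
proof -
  interpret real_distribution NN by (rule NN_real_dist)
  have "0 \<le> Phi (x - 1)" unfolding Phi_eq_cdf by (rule cdf_nonneg)
  also have "\<dots> < Phi x" by (rule Phi_strict) simp
  finally show ?thesis .
qed

lemma Phi_less1: "Phi x < 1"
proof -
  interpret real_distribution NN by (rule NN_real_dist)
  have "Phi x < Phi (x + 1)" by (rule Phi_strict) simp
  also have "\<dots> \<le> 1" unfolding Phi_eq_cdf by (rule cdf_bounded_prob)
  finally show ?thesis .
qed

lemma Phi_inj: "inj Phi"
  by (metis Phi_strict injI linorder_neqE_linordered_idom order_less_irrefl)

lemma Phi_surj: assumes "0 < p" "p < 1" shows "\<exists>x. Phi x = p"
proof -
  from Phi_lim_bot assms(1) have "eventually (\<lambda>x. Phi x < p) at_bot"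
    by (simp add: order_tendstoD(2))
  then obtain a where a: "Phi a < p" by (metis eventually_at_bot_linorder order_refl)
  from Phi_lim_top assms(2) have "eventually (\<lambda>x. Phi x > p) at_top"
    by (simp add: order_tendstoD(1))
  then obtain b0 where b0: "\<And>x. x \<ge> b0 \<Longrightarrow> Phi x > p" by (metis eventually_at_top_linorder)
  define b where "b = max a b0"
  have b: "Phi b > p" "a \<le> b" using b0[of b] by (auto simp: b_def)
  have "\<exists>x\<ge>a. x \<le> b \<and> Phi x = p"
    by (rule IVT) (use a b Phi_cont in auto)
  then show ?thesis by blast
qed

lemma Phi_inv_Phi[simp]: "Phi_inv (Phi x) = x"
  unfolding Phi_inv_def by (simp add: Phi_inj)

lemma Phi_Phi_inv: "0 < p \<Longrightarrow> p < 1 \<Longrightarrow> Phi (Phi_inv p) = p"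
  using Phi_surj[of p] unfolding Phi_inv_def by (auto intro: f_inv_into_f)

lemma Phi_inv_le_iff: "0 < p \<Longrightarrow> p < 1 \<Longrightarrow> Phi_inv p \<le> x \<longleftrightarrow> p \<le> Phi x"
  using Phi_Phi_inv[of p] Phi_strict[of x "Phi_inv p"] Phi_mono[of "Phi_inv p" x]
  by (metis not_le)

lemma Phi_borel[measurable]: "Phi \<in> borel_measurable borel"
  using Phi_cont by (intro borel_measurable_continuous_onI continuous_at_imp_continuous_on) auto

lemma Phi_inv_out: assumes "\<not> (0 < p \<and> p < 1)" shows "Phi_inv p = Phi_inv 2"
proof -
  have r: "\<And>p. \<not> (0 < p \<and> p < 1) \<Longrightarrow> (\<lambda>x. x \<in> UNIV \<and> Phi x = p) = (\<lambda>x. False)"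
    by (metis Phi_pos Phi_less1)
  show ?thesis unfolding Phi_inv_def inv_into_def using r[OF assms] r[of 2] by simp
qed

lemma Phi_inv_mono: "0 < p \<Longrightarrow> p \<le> p' \<Longrightarrow> p' < 1 \<Longrightarrow> Phi_inv p \<le> Phi_inv p'"
  using Phi_inv_le_iff[of p "Phi_inv p'"] Phi_Phi_inv[of p'] by simp

lemma Phi_inv_borel[measurable]: "Phi_inv \<in> borel_measurable borel"
proof -
  have eq: "Phi_inv = (\<lambda>p. if p \<in> {0<..<1} then Phi_inv p else Phi_inv 2)"
  proof (rule ext)
    fix p :: real
    show "Phi_inv p = (if p \<in> {0<..<1} then Phi_inv p else Phi_inv 2)"
    proof (cases "p \<in> {0<..<1}")
      case False
      then have "\<not> (0 < p \<and> p < 1)" by simp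
      from Phi_inv_out[OF this] False show ?thesis by (simp only: if_False)
    qed (simp only: if_True)
  qed
  have "mono_on {0<..<1} Phi_inv"
    by (rule mono_onI) (auto intro: Phi_inv_mono)
  then have m: "Phi_inv \<in> borel_measurable (restrict_space borel {0<..<1})"
    by (rule borel_measurable_mono_on_fnc)
  show ?thesis
  proof (subst eq, subst measurable_If_restrict_space_iff)
    have e: "{x \<in> space borel. x \<in> {0<..<1::real}} = {0<..<1}" by auto
    show "{x \<in> space borel. x \<in> {0<..<1::real}} \<in> sets borel" unfolding e by simp
    show "Phi_inv \<in> borel_measurable (restrict_space borel {x. x \<in> {0<..<1::real}}) \<and>
      (\<lambda>x. Phi_inv 2) \<in> borel_measurable (restrict_space borel {x. x \<notin> {0<..<1::real}})"
    proof -
      have e2: "{x. x \<in> {0<..<1::real}} = {0<..<1}" by auto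
      show ?thesis unfolding e2 by (intro conjI m measurable_const) simp
    qed
  qed
qed

definition UU :: "real measure" where
  "UU = restrict_space lborel {0..1}"

lemma space_UU[simp]: "space UU = {0..1}"
  by (simp add: UU_def)

lemma sets_UU: "sets UU = sets (restrict_space borel {0..1::real})"
  unfolding UU_def by (rule sets_restrict_space_cong) simp

lemma emeasure_UU: "A \<subseteq> {0..1} \<Longrightarrow> emeasure UU A = emeasure lborel A"
  unfolding UU_def by (rule emeasure_restrict_space) auto

lemma measurable_UU[measurable (raw)]:
  "f \<in> borel_measurable borel \<Longrightarrow> f \<in> borel_measurable UU"
  unfolding UU_def by (simp add: measurable_restrict_space1)

lemma prob_UU: "prob_space UU"
  unfolding UU_def by (rule prob_space_restrict_space) auto

lemma preimage_meas:
  fixes a x :: real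
  defines "A \<equiv> (\<lambda>u. Phi_inv (Phi a * u)) -` {x<..} \<inter> {0..1}"
  shows "emeasure lborel A = (if x < a then ennreal (1 - Phi x / Phi a) else 0)"
proof -
  have pa: "0 < Phi a" "Phi a < 1" using Phi_pos Phi_less1 by auto
  have m: "(\<lambda>u. Phi_inv (Phi a * u)) \<in> borel_measurable borel" by measurable
  have "(\<lambda>u. Phi_inv (Phi a * u)) -` {x<..} \<in> sets borel"
    using measurable_sets_borel[OF m, of "{x<..}"] by simp
  then have Ab: "A \<in> sets borel" unfolding A_def by auto
  have key: "u \<in> A \<longleftrightarrow> Phi x < Phi a * u" if u: "0 < u" "u \<le> 1" for u
  proof -
    have p: "0 < Phi a * u" "Phi a * u < 1" using pa u
      by (auto intro: mult_pos_pos) (metis mult_left_le mult.commute order_le_less_trans less_imp_le)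
    show ?thesis unfolding A_def using u Phi_inv_le_iff[OF p, of x] by auto
  qed
  have "emeasure lborel A = emeasure lborel (A - {0})"
    by (rule emeasure_Diff_null_set[symmetric]) (auto simp: Ab)
  also have "A - {0} = {0<..1} \<inter> {u. Phi x < Phi a * u}"
    using key by (auto simp: A_def)
  also have "\<dots> = {0<..1} \<inter> {Phi x / Phi a<..}"
    using pa by (auto simp: field_simps)
  also have "emeasure lborel \<dots> = (if x < a then ennreal (1 - Phi x / Phi a) else 0)"
  proof (cases "x < a")
    case True
    then have "Phi x < Phi a" by (rule Phi_strict)
    then have "Phi x / Phi a < 1" "0 < Phi x / Phi a" using pa Phi_pos[of x] by auto
    then have "{0<..1} \<inter> {Phi x / Phi a<..} = {Phi x / Phi a<..1}" by auto
    then show ?thesis using True \<open>Phi x / Phi a < 1\<close> by simp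
  next
    case False
    then have "Phi a \<le> Phi x" by (intro Phi_mono) simp
    then have "1 \<le> Phi x / Phi a" using pa by simp
    then have "{0<..1} \<inter> {Phi x / Phi a<..} = {}" by auto
    then show ?thesis using False by simp
  qed
  finally show ?thesis .
qed

lemma change_var:
  fixes a :: real and H :: "real \<Rightarrow> ennreal"
  assumes H[measurable]: "H \<in> borel_measurable borel"
  shows "(\<integral>\<^sup>+u. ennreal (Phi a) * H (Phi_inv (Phi a * u)) \<partial>UU) = (\<integral>\<^sup>+z. indicator {..a} z * H z \<partial>NN)"
proof -
  define \<psi> where "\<psi> u = Phi_inv (Phi a * u)" for u
  have m\<psi>: "\<psi> \<in> borel_measurable borel" unfolding \<psi>_def by measurable
  then have m\<psi>U: "\<psi> \<in> measurable UU borel" by (rule measurable_UU)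
  define M1 where "M1 = density (distr UU borel \<psi>) (\<lambda>_. ennreal (Phi a))"
  define M2 where "M2 = density NN (indicator {..a})"
  have pa: "0 < Phi a" using Phi_pos by auto
  have e1: "emeasure M1 {x<..} = (if x < a then ennreal (Phi a - Phi x) else 0)" for x
  proof -
    have "emeasure M1 {x<..} = (\<integral>\<^sup>+y. ennreal (Phi a) * indicator {x<..} y \<partial>distr UU borel \<psi>)"
      unfolding M1_def by (simp add: emeasure_density)
    also have "\<dots> = ennreal (Phi a) * emeasure (distr UU borel \<psi>) {x<..}"
      by (simp add: nn_integral_cmult_indicator)
    also have "emeasure (distr UU borel \<psi>) {x<..} = emeasure UU (\<psi> -` {x<..} \<inter> {0..1})"
      using m\<psi>U by (simp add: emeasure_distr)
    also have "\<dots> = emeasure lborel (\<psi> -` {x<..} \<inter> {0..1})"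
      by (rule emeasure_UU) auto
    also have "\<dots> = (if x < a then ennreal (1 - Phi x / Phi a) else 0)"
      unfolding \<psi>_def by (rule preimage_meas)
    also have "ennreal (Phi a) * \<dots> = (if x < a then ennreal (Phi a - Phi x) else 0)"
    proof (cases "x < a")
      case True
      then have "Phi x < Phi a" by (rule Phi_strict)
      then have "0 \<le> 1 - Phi x / Phi a" using pa by simp
      then show ?thesis using True pa
        by (simp add: ennreal_mult[symmetric] field_simps)
    qed simp
    finally show ?thesis .
  qed
  have e2: "emeasure M2 {x<..} = (if x < a then ennreal (Phi a - Phi x) else 0)" for x
  proof -
    have "emeasure M2 {x<..} = (\<integral>\<^sup>+y. indicator {..a} y * indicator {x<..} y \<partial>NN)"
      unfolding M2_def by (simp add: emeasure_density)
    also have "\<dots> = (\<integral>\<^sup>+y. indicator {x<..a} y \<partial>NN)"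
      by (intro nn_integral_cong) (simp split: split_indicator)
    also have "\<dots> = emeasure NN {x<..a}" by simp
    also have "\<dots> = (if x < a then ennreal (Phi a - Phi x) else 0)"
    proof (cases "x < a")
      case True
      interpret prob_space NN by (rule NN_prob)
      show ?thesis using True by (simp add: Phi_diff emeasure_eq_measure)
    qed simp
    finally show ?thesis .
  qed
  have "M1 = M2"
  proof (rule measure_eqI_lessThan)
    show "sets M1 = sets borel" "sets M2 = sets borel" by (simp_all add: M1_def M2_def)
    show "emeasure M1 {x<..} < \<infinity>" for x by (simp add: e1)
    show "emeasure M1 {x<..} = emeasure M2 {x<..}" for x by (simp add: e1 e2)
  qed
  have "(\<integral>\<^sup>+u. ennreal (Phi a) * H (Phi_inv (Phi a * u)) \<partial>UU) = (\<integral>\<^sup>+y. ennreal (Phi a) * H y \<partial>distr UU borel \<psi>)"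
    using m\<psi>U by (simp add: nn_integral_distr \<psi>_def)
  also have "\<dots> = integral\<^sup>N M1 H"
    unfolding M1_def by (simp add: nn_integral_density)
  also have "\<dots> = integral\<^sup>N M2 H" by (simp add: \<open>M1 = M2\<close>)
  also have "\<dots> = (\<integral>\<^sup>+z. indicator {..a} z * H z \<partial>NN)"
    unfolding M2_def by (simp add: nn_integral_density)
  finally show ?thesis .
qed

lemma pstep_meas[measurable]: "pstep B mu sig dt \<in> borel_measurable borel"
  unfolding pstep_def by measurable

lemma Su_meas:
  "t \<le> n \<Longrightarrow> (\<lambda>u. Su S0 B mu sig dt u t) \<in> borel_measurable (PiM {1..n} (\<lambda>_. UU))"
proof (induction t)
  case 0 then show ?case by simp
next
  case (Suc t)
  have c: "(\<lambda>u. u (Suc t)) \<in> borel_measurable (PiM {1..n} (\<lambda>_. UU))"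
    using measurable_compose[OF measurable_component_singleton[of "Suc t" "{1..n}" "\<lambda>_. UU"] measurable_UU[of "\<lambda>x. x"]]
      Suc.prems by simp
  have ih: "(\<lambda>u. Su S0 B mu sig dt u t) \<in> borel_measurable (PiM {1..n} (\<lambda>_. UU))"
    using Suc by simp
  show ?case using c ih by simp measurable
qed

lemma Spath_meas:
  "j \<le> n \<Longrightarrow> (\<lambda>z. Spath S0 mu sig dt z j) \<in> borel_measurable (PiM {0..<n} (\<lambda>_. NN))"
proof (induction j)
  case 0 then show ?case by simp
next
  case (Suc j)
  have c: "(\<lambda>z. z j) \<in> borel_measurable (PiM {0..<n} (\<lambda>_. NN))"
    using measurable_compose[OF measurable_component_singleton[of j "{0..<n}" "\<lambda>_. NN"], of "\<lambda>x. x"]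
      Suc.prems by (simp add: measurable_ident_sets)
  have ih: "(\<lambda>z. Spath S0 mu sig dt z j) \<in> borel_measurable (PiM {0..<n} (\<lambda>_. NN))"
    using Suc by simp
  show ?case using c ih by simp measurable
qed

lemma Su_upd: "t \<le> n \<Longrightarrow> Su S0 B mu sig dt (u(Suc n := y)) t = Su S0 B mu sig dt u t"
  by (induction t) auto

lemma Spath_upd: "j \<le> n \<Longrightarrow> Spath S0 mu sig dt (z(n := y)) j = Spath S0 mu sig dt z j"
  by (induction j) auto

lemma Su_pos: "S0 > 0 \<Longrightarrow> Su S0 B mu sig dt u t > 0"
  by (induction t) auto

lemma Spath_pos: "S0 > 0 \<Longrightarrow> Spath S0 mu sig dt z t > 0"
  by (induction t) auto

lemma pstep_nonneg: "0 \<le> pstep B mu sig dt s"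
  unfolding pstep_def using Phi_pos less_imp_le by blast

lemma step_lemma:
  fixes f :: "real \<Rightarrow> ennreal"
  assumes f[measurable]: "f \<in> borel_measurable borel"
    and pos: "dt > 0" "sig > 0" "s > 0" "B > 0"
  shows "(\<integral>\<^sup>+u. ennreal (pstep B mu sig dt s) *
            f (s * exp (drift mu sig dt + sig * sqrt dt * Phi_inv (pstep B mu sig dt s * u))) \<partial>UU)
       = (\<integral>\<^sup>+z. (if s * exp (drift mu sig dt + sig * sqrt dt * z) \<le> B
                  then f (s * exp (drift mu sig dt + sig * sqrt dt * z)) else 0) \<partial>NN)"
proof -
  define c where "c = sig * sqrt dt"
  have c: "c > 0" using pos by (simp add: c_def)
  define a where "a = (ln (B / s) - drift mu sig dt) / c"
  have ps: "pstep B mu sig dt s = Phi a" unfolding pstep_def a_def c_def by simp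
  have iff: "s * exp (drift mu sig dt + c * z) \<le> B \<longleftrightarrow> z \<le> a" for z
  proof -
    have "s * exp (drift mu sig dt + c * z) \<le> B \<longleftrightarrow> ln (s * exp (drift mu sig dt + c * z)) \<le> ln B"
      using pos by (subst ln_le_cancel_iff) auto
    also have "\<dots> \<longleftrightarrow> ln s + drift mu sig dt + c * z \<le> ln B"
      using pos by (simp add: ln_mult add.assoc)
    also have "\<dots> \<longleftrightarrow> c * z \<le> ln (B / s) - drift mu sig dt"
      using pos by (simp add: ln_div) linarith
    also have "\<dots> \<longleftrightarrow> z \<le> a" unfolding a_def using c by (simp add: field_simps)
    finally show ?thesis .
  qed
  have "(\<integral>\<^sup>+u. ennreal (Phi a) * f (s * exp (drift mu sig dt + c * Phi_inv (Phi a * u))) \<partial>UU)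
      = (\<integral>\<^sup>+z. indicator {..a} z * f (s * exp (drift mu sig dt + c * z)) \<partial>NN)"
    by (rule change_var) measurable
  also have "\<dots> = (\<integral>\<^sup>+z. (if s * exp (drift mu sig dt + c * z) \<le> B
                  then f (s * exp (drift mu sig dt + c * z)) else 0) \<partial>NN)"
    by (intro nn_integral_cong) (simp add: iff split: split_indicator)
  finally show ?thesis by (simp only: ps c_def)
qed

lemma main_ind:
  assumes pos: "dt > 0" "sig > 0" "S0 > 0" "B > 0"
  shows "f \<in> borel_measurable borel \<Longrightarrow>
    (\<integral>\<^sup>+u. ennreal (\<Prod>t<n. p_u S0 B mu sig dt u t) * f (Su S0 B mu sig dt u n) \<partial>PiM {1..n} (\<lambda>_. UU))
  = (\<integral>\<^sup>+z. (if \<forall>j\<in>{1..n}. Spath S0 mu sig dt z j \<le> B then f (Spath S0 mu sig dt z n) else 0)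
       \<partial>PiM {0..<n} (\<lambda>_. NN))"
proof (induction n arbitrary: f)
  case 0
  then show ?case by (simp add: PiM_empty)
next
  case (Suc n)
  note fm[measurable] = Suc.prems
  interpret U: product_sigma_finite "\<lambda>_. UU"
    unfolding product_sigma_finite_def using prob_space_imp_sigma_finite[OF prob_UU] by simp
  interpret N: product_sigma_finite "\<lambda>_. NN"
    unfolding product_sigma_finite_def using prob_space_imp_sigma_finite[OF NN_prob] by simp
  define d where "d = drift mu sig dt"
  define c where "c = sig * sqrt dt"
  define h where "h s = (\<integral>\<^sup>+z. (if s * exp (d + c * z) \<le> B then f (s * exp (d + c * z)) else 0) \<partial>NN)" for s
  have hm: "h \<in> borel_measurable borel"
    unfolding h_def by (rule sigma_finite_measure.borel_measurable_nn_integral[OF prob_space_imp_sigma_finite[OF NN_prob]]) measurable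
  note IH = Suc.IH[OF hm]
  have insU: "{1..Suc n} = insert (Suc n) {1..n}" by auto
  have insN: "{0..<Suc n} = insert n {0..<n}" by auto
  have pm: "(\<lambda>u. p_u S0 B mu sig dt u t) \<in> borel_measurable (PiM {1..m} (\<lambda>_. UU))" if "t \<le> m" for t m
    unfolding p_u_def using Su_meas[OF that, of S0 B mu sig dt] by measurable
  have Lm: "(\<lambda>u. ennreal (\<Prod>t<Suc n. p_u S0 B mu sig dt u t) * f (Su S0 B mu sig dt u (Suc n)))
      \<in> borel_measurable (PiM (insert (Suc n) {1..n}) (\<lambda>_. UU))"
  proof -
    have "(\<lambda>u. \<Prod>t<Suc n. p_u S0 B mu sig dt u t) \<in> borel_measurable (PiM {1..Suc n} (\<lambda>_. UU))"
      by (rule borel_measurable_prod) (use pm in auto)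
    moreover have "(\<lambda>u. Su S0 B mu sig dt u (Suc n)) \<in> borel_measurable (PiM {1..Suc n} (\<lambda>_. UU))"
      by (rule Su_meas) simp
    ultimately show ?thesis unfolding insU by measurable
  qed
  have "(\<integral>\<^sup>+u. ennreal (\<Prod>t<Suc n. p_u S0 B mu sig dt u t) * f (Su S0 B mu sig dt u (Suc n)) \<partial>PiM {1..Suc n} (\<lambda>_. UU))
      = (\<integral>\<^sup>+x. (\<integral>\<^sup>+y. ennreal (\<Prod>t<Suc n. p_u S0 B mu sig dt (x(Suc n := y)) t) *
            f (Su S0 B mu sig dt (x(Suc n := y)) (Suc n)) \<partial>UU) \<partial>PiM {1..n} (\<lambda>_. UU))"
    unfolding insU
    by (rule U.product_nn_integral_insert[OF _ _ Lm]) auto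
  also have "\<dots> = (\<integral>\<^sup>+x. ennreal (\<Prod>t<n. p_u S0 B mu sig dt x t) * h (Su S0 B mu sig dt x n) \<partial>PiM {1..n} (\<lambda>_. UU))"
  proof (intro nn_integral_cong)
    fix x
    define s where "s = Su S0 B mu sig dt x n"
    define P where "P = (\<Prod>t<n. p_u S0 B mu sig dt x t)"
    have spos: "s > 0" unfolding s_def using pos by (simp add: Su_pos)
    have P0: "0 \<le> P" unfolding P_def p_u_def by (intro prod_nonneg) (simp add: pstep_nonneg)
    have e1: "(\<Prod>t<Suc n. p_u S0 B mu sig dt (x(Suc n := y)) t) = P * pstep B mu sig dt s" for y
      unfolding P_def s_def p_u_def by (simp add: Su_upd)
    have e2: "Su S0 B mu sig dt (x(Suc n := y)) (Suc n) = s * exp (d + c * Phi_inv (pstep B mu sig dt s * y))" for y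
      unfolding s_def d_def c_def by (simp add: Su_upd)
    have "(\<integral>\<^sup>+y. ennreal (\<Prod>t<Suc n. p_u S0 B mu sig dt (x(Suc n := y)) t) *
            f (Su S0 B mu sig dt (x(Suc n := y)) (Suc n)) \<partial>UU)
        = (\<integral>\<^sup>+y. ennreal P * (ennreal (pstep B mu sig dt s) * f (s * exp (d + c * Phi_inv (pstep B mu sig dt s * y)))) \<partial>UU)"
      unfolding e1 e2 using P0 pstep_nonneg by (simp add: ennreal_mult mult.assoc)
    also have "\<dots> = ennreal P * (\<integral>\<^sup>+y. ennreal (pstep B mu sig dt s) * f (s * exp (d + c * Phi_inv (pstep B mu sig dt s * y))) \<partial>UU)"
      by (rule nn_integral_cmult, rule measurable_UU) measurable
    also have "\<dots> = ennreal P * h s"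
      unfolding h_def d_def c_def by (subst step_lemma) (use pos spos in auto)
    finally show "(\<integral>\<^sup>+y. ennreal (\<Prod>t<Suc n. p_u S0 B mu sig dt (x(Suc n := y)) t) *
            f (Su S0 B mu sig dt (x(Suc n := y)) (Suc n)) \<partial>UU) =
          ennreal (\<Prod>t<n. p_u S0 B mu sig dt x t) * h (Su S0 B mu sig dt x n)"
      by (simp add: P_def s_def)
  qed
  also have "\<dots> = (\<integral>\<^sup>+z. (if \<forall>j\<in>{1..n}. Spath S0 mu sig dt z j \<le> B then h (Spath S0 mu sig dt z n) else 0)
       \<partial>PiM {0..<n} (\<lambda>_. NN))" by (rule IH)
  also have "\<dots> = (\<integral>\<^sup>+x. (\<integral>\<^sup>+y. (if \<forall>j\<in>{1..Suc n}. Spath S0 mu sig dt (x(n := y)) j \<le> B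
          then f (Spath S0 mu sig dt (x(n := y)) (Suc n)) else 0) \<partial>NN) \<partial>PiM {0..<n} (\<lambda>_. NN))"
  proof (intro nn_integral_cong)
    fix x
    define s where "s = Spath S0 mu sig dt x n"
    have e: "Spath S0 mu sig dt (x(n := y)) (Suc n) = s * exp (d + c * y)" for y
      unfolding s_def d_def c_def by (simp add: Spath_upd)
    have b: "(\<forall>j\<in>{1..Suc n}. Spath S0 mu sig dt (x(n := y)) j \<le> B) \<longleftrightarrow>
        (\<forall>j\<in>{1..n}. Spath S0 mu sig dt x j \<le> B) \<and> s * exp (d + c * y) \<le> B" for y
      using e by (auto simp: atLeastAtMostSuc_conv Spath_upd)
    show "(if \<forall>j\<in>{1..n}. Spath S0 mu sig dt x j \<le> B then h (Spath S0 mu sig dt x n) else 0) =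
      (\<integral>\<^sup>+y. (if \<forall>j\<in>{1..Suc n}. Spath S0 mu sig dt (x(n := y)) j \<le> B
          then f (Spath S0 mu sig dt (x(n := y)) (Suc n)) else 0) \<partial>NN)"
    proof (cases "\<forall>j\<in>{1..n}. Spath S0 mu sig dt x j \<le> B")
      case False
      then have "\<And>y. (if \<forall>j\<in>{1..Suc n}. Spath S0 mu sig dt (x(n := y)) j \<le> B
          then f (Spath S0 mu sig dt (x(n := y)) (Suc n)) else 0) = 0"
        using b False by (metis (no_types, lifting))
      note z0 = this
      show ?thesis using False by (simp only: z0 if_not_P) simp
    qed (unfold b e h_def s_def, simp)
  qed
  also have "\<dots> = (\<integral>\<^sup>+z. (if \<forall>j\<in>{1..Suc n}. Spath S0 mu sig dt z j \<le> B then f (Spath S0 mu sig dt z (Suc n)) else 0)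
       \<partial>PiM {0..<Suc n} (\<lambda>_. NN))"
  proof -
    have sm: "\<And>j. j \<le> Suc n \<Longrightarrow> (\<lambda>z. Spath S0 mu sig dt z j) \<in> borel_measurable (PiM {0..<Suc n} (\<lambda>_. NN))"
      by (rule Spath_meas)
    have "(\<lambda>z. (if \<forall>j\<in>{1..Suc n}. Spath S0 mu sig dt z j \<le> B then f (Spath S0 mu sig dt z (Suc n)) else 0))
       \<in> borel_measurable (PiM {0..<Suc n} (\<lambda>_. NN))"
    proof -
      have pr: "Measurable.pred (PiM {0..<Suc n} (\<lambda>_. NN)) (\<lambda>z. \<forall>j\<in>{1..Suc n}. Spath S0 mu sig dt z j \<le> B)"
      proof (rule pred_intros_finite(3))
        fix j assume "j \<in> {1..Suc n}"
        then have [measurable]: "(\<lambda>z. Spath S0 mu sig dt z j) \<in> borel_measurable (PiM {0..<Suc n} (\<lambda>_. NN))"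
          by (intro sm) simp
        show "Measurable.pred (PiM {0..<Suc n} (\<lambda>_. NN)) (\<lambda>z. Spath S0 mu sig dt z j \<le> B)" by measurable
      qed simp
      have fm2: "(\<lambda>z. f (Spath S0 mu sig dt z (Suc n))) \<in> borel_measurable (PiM {0..<Suc n} (\<lambda>_. NN))"
        using measurable_compose[OF sm[of "Suc n"] fm] by simp
      show ?thesis
        by (rule measurable_If[OF fm2 measurable_const pr[unfolded pred_def]]) simp
    qed
    then show ?thesis
      unfolding insN
      by (intro N.product_nn_integral_insert[symmetric]) auto
  qed
  finally show ?case .
qed

lemma W_meas:
  fixes g :: "real \<Rightarrow> real"
  assumes gm: "g \<in> borel_measurable borel"
  shows "(\<lambda>z. if \<forall>j\<in>{1..n}. Spath S0 mu sig dt z j \<le> B then g (Spath S0 mu sig dt z n) else 0)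
     \<in> borel_measurable (PiM {0..<n} (\<lambda>_. NN))"
proof -
  have sm: "\<And>j. j \<le> n \<Longrightarrow> (\<lambda>z. Spath S0 mu sig dt z j) \<in> borel_measurable (PiM {0..<n} (\<lambda>_. NN))"
    by (rule Spath_meas)
  have pr: "Measurable.pred (PiM {0..<n} (\<lambda>_. NN)) (\<lambda>z. \<forall>j\<in>{1..n}. Spath S0 mu sig dt z j \<le> B)"
  proof (rule pred_intros_finite(3))
    fix j assume "j \<in> {1..n}"
    then have [measurable]: "(\<lambda>z. Spath S0 mu sig dt z j) \<in> borel_measurable (PiM {0..<n} (\<lambda>_. NN))"
      by (intro sm) simp
    show "Measurable.pred (PiM {0..<n} (\<lambda>_. NN)) (\<lambda>z. Spath S0 mu sig dt z j \<le> B)" by measurable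
  qed simp
  have fm2: "(\<lambda>z. g (Spath S0 mu sig dt z n)) \<in> borel_measurable (PiM {0..<n} (\<lambda>_. NN))"
    using measurable_compose[OF sm[of n] gm] by simp
  show ?thesis
    by (rule measurable_If[OF fm2 measurable_const pr[unfolded pred_def]]) simp
qed

lemma Spath_cong: "(\<And>j. j < t \<Longrightarrow> z j = z' j) \<Longrightarrow> Spath S0 mu sig dt z t = Spath S0 mu sig dt z' t"
  by (induction t) auto

lemma qm[measurable]: "q_call K \<in> borel_measurable borel"
  unfolding q_call_def by measurable


theorem theorem2p4:
  fixes M :: "'a measure" and Z :: "nat \<Rightarrow> 'a \<Rightarrow> real"
    and T :: nat and dt r mu sig S0 B K :: real
  assumes "dt > 0" and "sig > 0" and "S0 > 0" and "B > 0"
    and "prob_space M"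
    and "prob_space.indep_vars M (\<lambda>_. borel) Z {0..<T}"
    and "\<And>j. j < T \<Longrightarrow> distributed M lborel (Z j) (\<lambda>x. ennreal (std_normal_density x))"
  shows "exp (- r * real T * dt) *
           (\<integral>\<omega>. barrier_payoff K B T (Spath S0 mu sig dt (\<lambda>j. Z j \<omega>)) \<partial>M)
       = exp (- r * real T * dt) *
           (\<integral>u. (\<Prod>t<T. p_u S0 B mu sig dt u t) * q_call K (Su S0 B mu sig dt u T)
              \<partial>(PiM {1..T} (\<lambda>_. restrict_space lborel {0..1})))"
proof -
  interpret M: prob_space M by fact
  define W where "W z = barrier_payoff K B T (Spath S0 mu sig dt z)" for z
  define R where "R u = (\<Prod>t<T. p_u S0 B mu sig dt u t) * q_call K (Su S0 B mu sig dt u T)" for u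
  have Wm: "W \<in> borel_measurable (PiM {0..<T} (\<lambda>_. NN))"
    unfolding W_def barrier_payoff_def by (rule W_meas) measurable
  have pm: "(\<lambda>u. p_u S0 B mu sig dt u t) \<in> borel_measurable (PiM {1..T} (\<lambda>_. UU))" if "t \<le> T" for t
    unfolding p_u_def using Su_meas[OF that, of S0 B mu sig dt] by measurable
  have Rm: "R \<in> borel_measurable (PiM {1..T} (\<lambda>_. UU))"
  proof -
    have "(\<lambda>u. \<Prod>t<T. p_u S0 B mu sig dt u t) \<in> borel_measurable (PiM {1..T} (\<lambda>_. UU))"
      by (rule borel_measurable_prod) (use pm in auto)
    moreover have "(\<lambda>u. Su S0 B mu sig dt u T) \<in> borel_measurable (PiM {1..T} (\<lambda>_. UU))"
      by (rule Su_meas) simp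
    ultimately show ?thesis unfolding R_def by measurable
  qed
  have P0: "0 \<le> (\<Prod>t<T. p_u S0 B mu sig dt u t)" for u
    unfolding p_u_def by (intro prod_nonneg) (simp add: pstep_nonneg)
  have q0: "0 \<le> q_call K x" for x by (simp add: q_call_def)
  have key: "(\<integral>z. W z \<partial>PiM {0..<T} (\<lambda>_. NN)) = (\<integral>u. R u \<partial>PiM {1..T} (\<lambda>_. UU))"
  proof -
    have "(\<integral>z. W z \<partial>PiM {0..<T} (\<lambda>_. NN)) = enn2real (\<integral>\<^sup>+z. ennreal (W z) \<partial>PiM {0..<T} (\<lambda>_. NN))"
      by (rule integral_eq_nn_integral[OF Wm]) (simp add: W_def barrier_payoff_def q0)
    also have "(\<integral>\<^sup>+z. ennreal (W z) \<partial>PiM {0..<T} (\<lambda>_. NN)) =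
      (\<integral>\<^sup>+z. (if \<forall>j\<in>{1..T}. Spath S0 mu sig dt z j \<le> B then ennreal (q_call K (Spath S0 mu sig dt z T)) else 0)
       \<partial>PiM {0..<T} (\<lambda>_. NN))"
      by (intro nn_integral_cong) (simp add: W_def barrier_payoff_def)
    also have "\<dots> = (\<integral>\<^sup>+u. ennreal (\<Prod>t<T. p_u S0 B mu sig dt u t) * ennreal (q_call K (Su S0 B mu sig dt u T)) \<partial>PiM {1..T} (\<lambda>_. UU))"
      by (rule main_ind[symmetric, where f="\<lambda>x. ennreal (q_call K x)"]) (use assms in auto)
    also have "\<dots> = (\<integral>\<^sup>+u. ennreal (R u) \<partial>PiM {1..T} (\<lambda>_. UU))"
      by (intro nn_integral_cong) (simp add: R_def ennreal_mult P0 q0)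
    also have "enn2real \<dots> = (\<integral>u. R u \<partial>PiM {1..T} (\<lambda>_. UU))"
      by (rule integral_eq_nn_integral[OF Rm, symmetric]) (simp add: R_def P0 q0)
    finally show ?thesis .
  qed
  have lhs: "(\<integral>\<omega>. barrier_payoff K B T (Spath S0 mu sig dt (\<lambda>j. Z j \<omega>)) \<partial>M) = (\<integral>z. W z \<partial>PiM {0..<T} (\<lambda>_. NN))"
  proof (cases "T = 0")
    case True
    interpret P: prob_space "PiM {} (\<lambda>_. NN)"
      by (rule prob_space_PiM) (simp add: NN_prob)
    show ?thesis using True by (simp add: W_def barrier_payoff_def M.prob_space P.prob_space)
  next
    case False
    define X where "X \<omega> = (\<lambda>j\<in>{0..<T}. Z j \<omega>)" for \<omega>
    have Zm: "Z j \<in> borel_measurable M" if "j \<in> {0..<T}" for j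
      using distributed_measurable[OF assms(7)] that by simp
    have Xm: "X \<in> measurable M (PiM {0..<T} (\<lambda>_. borel))"
      unfolding X_def by (rule measurable_restrict) (rule Zm)
    have "distr M (PiM {0..<T} (\<lambda>_. borel)) X = PiM {0..<T} (\<lambda>i. distr M borel (Z i))"
      using assms(6) M.indep_vars_iff_distr_eq_PiM'[where I="{0..<T}" and M'="\<lambda>_. borel" and X=Z] False Zm
      unfolding X_def by simp
    also have "\<dots> = PiM {0..<T} (\<lambda>_. NN)"
    proof (rule PiM_cong)
      fix i assume i: "i \<in> {0..<T}"
      have "distr M borel (Z i) = distr M lborel (Z i)" by (rule distr_cong) auto
      also have "\<dots> = NN" unfolding NN_def using distributed_distr_eq_density[OF assms(7)] i by simp
      finally show "distr M borel (Z i) = NN" .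
    qed simp
    finally have dist: "distr M (PiM {0..<T} (\<lambda>_. borel)) X = PiM {0..<T} (\<lambda>_. NN)" .
    have Wm': "W \<in> borel_measurable (PiM {0..<T} (\<lambda>_. borel))"
      using Wm by (subst measurable_cong_sets[OF sets_PiM_cong[of "{0..<T}" "{0..<T}" "\<lambda>_. borel" "\<lambda>_. NN"] refl]) auto
    have eqW: "barrier_payoff K B T (Spath S0 mu sig dt (\<lambda>j. Z j \<omega>)) = W (X \<omega>)" for \<omega>
    proof -
      have "Spath S0 mu sig dt (\<lambda>j. Z j \<omega>) j = Spath S0 mu sig dt (X \<omega>) j" if "j \<le> T" for j
        by (rule Spath_cong) (use that in \<open>auto simp: X_def\<close>)
      then show ?thesis unfolding W_def barrier_payoff_def by auto
    qed
    have "(\<integral>\<omega>. barrier_payoff K B T (Spath S0 mu sig dt (\<lambda>j. Z j \<omega>)) \<partial>M) = (\<integral>\<omega>. W (X \<omega>) \<partial>M)"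
      by (simp add: eqW)
    also have "\<dots> = (\<integral>z. W z \<partial>distr M (PiM {0..<T} (\<lambda>_. borel)) X)"
      by (rule integral_distr[OF Xm Wm', symmetric])
    also have "\<dots> = (\<integral>z. W z \<partial>PiM {0..<T} (\<lambda>_. NN))" by (simp add: dist)
    finally show ?thesis .
  qed
  show ?thesis using lhs key by (simp add: R_def UU_def)
qed

end
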